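(* Let $0<p<1$ and let $k\ge 1$ be an integer. A coin showing heads (H) with probability $p$ and tails (T) with probability $1-p$ is flipped independently until $k$ consecutive heads $\mathrm{H}^k$ first appear; let $Y$ be the number of flips. Then $E(Y^0)=1$ and for every $n\ge 1$, \[ E(Y^n) = k^n + \sum_{j=0}^{n-1} \binom{n}{j} E(Y^j) \sum_{i=1}^k \frac{(1-p)\,i^{n-j}}{p^{k-i+1}} = k^n + \sum_{j=0}^{n-1} \binom{n}{j} E(Y^j) \sum_{i=0}^n \frac{e_{n-j,i}\, p^i - e_{n-j,i}^k\, p^{k+i+1}}{(1-p)^{n-j}p^{k+1}}. \]
   Context: The Eulerian numbers $e_{n,i}$ are defined by $e_{0,0}=1$, $e_{n,i}=0$ whenever $i\le 0$ (unless $n=i=0$) or $i>n$, and $e_{n,i}=i\,e_{n-1,i}+(n-i+1)\,e_{n-1,i-1}$ otherwise. For the integer parameter $k$, $e^k_{0,0}=1$, $e^k_{n,i}=0$ whenever $i<0$ or $i>n$, and $e^k_{n,i}=(k+i+1)\,e^k_{n-1,i}+(n-k-i)\,e^k_{n-1,i-1}$ otherwise. *)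

theory Defs
  imports "HOL-Probability.Probability"
begin

fun eulerian :: "nat \<Rightarrow> nat \<Rightarrow> int" where
  "eulerian 0 i = (if i = 0 then 1 else 0)"
| "eulerian (Suc n) i =
     (if i = 0 \<or> i > Suc n then 0
      else int i * eulerian n i + int (Suc n - i + 1) * eulerian n (i - 1))"

fun eulerian_k :: "int \<Rightarrow> nat \<Rightarrow> nat \<Rightarrow> int" where
  "eulerian_k k 0 i = (if i = 0 then 1 else 0)"
| "eulerian_k k (Suc n) i =
     (if i > Suc n then 0
      else (k + int i + 1) * eulerian_k k n i
           + (int (Suc n) - k - int i) * (if i = 0 then 0 else eulerian_k k n (i - 1)))"

text \<open>Number of flips until k consecutive heads (True = heads) first appear:
  the least m >= k such that flips m-k, ..., m-1 (0-indexed) are all heads.\<close>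
definition waiting_time :: "nat \<Rightarrow> bool stream \<Rightarrow> nat" where
  "waiting_time k \<omega> = (LEAST m. k \<le> m \<and> (\<forall>i<k. \<omega> !! (m - 1 - i)))"

end

theory Submission
  imports Defs "HOL-Computational_Algebra.Polynomial"
begin


lemma measurable_shift_const[measurable]:
  "(\<lambda>\<omega>. xs @- \<omega>) \<in> measurable (stream_space (measure_pmf B)) (stream_space (measure_pmf B))"
proof (induction xs)
  case Nil then show ?case by simp
next
  case (Cons x xs)
  then show ?case by (simp add: measurable_Stream)
qed

lemma rep_shift: "replicate (Suc m) x @- \<omega> = replicate m x @- x ## \<omega>"
  by (induction m) auto

lemma ennreal_lin:
  fixes c I :: "nat \<Rightarrow> real"
  assumes "\<And>i. 0 \<le> c i" "\<And>i. 0 \<le> I i" "0\<le>a" "0\<le>b"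
  shows "(\<Sum>i<m. ennreal (c i) * ennreal (I i)) + ennreal a * ennreal b = ennreal ((\<Sum>i<m. c i * I i) + a*b)"
proof -
  have "(\<Sum>i<m. ennreal (c i) * ennreal (I i)) = (\<Sum>i<m. ennreal (c i * I i))"
    by (rule sum.cong) (simp_all add: ennreal_mult assms)
  also have "\<dots> = ennreal (\<Sum>i<m. c i * I i)" by (rule sum_ennreal) (simp add: assms)
  finally show ?thesis using assms by (simp add: ennreal_mult sum_nonneg)
qed

context fixes p :: real assumes p0: "0 < p" and p1: "p < 1"
begin

lemma decomp:
  assumes [measurable]: "G \<in> borel_measurable (stream_space (measure_pmf (bernoulli_pmf p)))"
  shows "(\<integral>\<^sup>+\<omega>. G \<omega> \<partial>stream_space (measure_pmf (bernoulli_pmf p))) =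
    (\<Sum>i<m. ennreal (p^i*(1-p)) * (\<integral>\<^sup>+\<omega>. G (replicate i True @- False ## \<omega>) \<partial>stream_space (measure_pmf (bernoulli_pmf p))))
    + ennreal (p^m) * (\<integral>\<^sup>+\<omega>. G (replicate m True @- \<omega>) \<partial>stream_space (measure_pmf (bernoulli_pmf p)))"
proof (induction m)
  case 0 then show ?case by simp
next
  case (Suc m)
  let ?M = "stream_space (measure_pmf (bernoulli_pmf p))"
  have "(\<integral>\<^sup>+\<omega>. G (replicate m True @- \<omega>) \<partial>?M) =
     (\<integral>\<^sup>+x. (\<integral>\<^sup>+\<omega>. G (replicate m True @- (x ## \<omega>)) \<partial>?M) \<partial>measure_pmf (bernoulli_pmf p))"
    by (rule prob_space.nn_integral_stream_space) (auto simp: prob_space_measure_pmf)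
  also have "\<dots> = (\<integral>\<^sup>+\<omega>. G (replicate (Suc m) True @- \<omega>) \<partial>?M) * ennreal p
       + (\<integral>\<^sup>+\<omega>. G (replicate m True @- False ## \<omega>) \<partial>?M) * ennreal (1-p)"
    using p0 p1 by (simp add: rep_shift del: replicate_Suc)
  finally have *: "(\<integral>\<^sup>+\<omega>. G (replicate m True @- \<omega>) \<partial>?M) = \<dots>" .
  have e: "ennreal (p^m) * (X * ennreal p + Y * ennreal (1-p)) = ennreal (p ^ Suc m) * X + ennreal (p^m*(1-p)) * Y" for X Y
    using p0 p1 by (simp add: distrib_left ennreal_mult mult_ac)
  show ?case unfolding Suc * e by (simp add: add_ac del: replicate_Suc)
qed

lemma decomp_real:
  fixes G :: "bool stream \<Rightarrow> real"
  assumes [measurable]: "G \<in> borel_measurable (stream_space (measure_pmf (bernoulli_pmf p)))"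
    and nn: "\<And>\<omega>. 0 \<le> G \<omega>"
    and i0: "integrable (stream_space (measure_pmf (bernoulli_pmf p))) G"
    and i1: "\<And>i. i < m \<Longrightarrow> integrable (stream_space (measure_pmf (bernoulli_pmf p))) (\<lambda>\<omega>. G (replicate i True @- False ## \<omega>))"
    and i2: "integrable (stream_space (measure_pmf (bernoulli_pmf p))) (\<lambda>\<omega>. G (replicate m True @- \<omega>))"
  shows "(\<integral>\<omega>. G \<omega> \<partial>stream_space (measure_pmf (bernoulli_pmf p))) =
    (\<Sum>i<m. p^i*(1-p) * (\<integral>\<omega>. G (replicate i True @- False ## \<omega>) \<partial>stream_space (measure_pmf (bernoulli_pmf p))))
    + p^m * (\<integral>\<omega>. G (replicate m True @- \<omega>) \<partial>stream_space (measure_pmf (bernoulli_pmf p)))"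
proof -
  let ?M = "stream_space (measure_pmf (bernoulli_pmf p))"
  have d: "(\<integral>\<^sup>+\<omega>. ennreal (G \<omega>) \<partial>?M) =
    (\<Sum>i<m. ennreal (p^i*(1-p)) * (\<integral>\<^sup>+\<omega>. ennreal (G (replicate i True @- False ## \<omega>)) \<partial>?M))
    + ennreal (p^m) * (\<integral>\<^sup>+\<omega>. ennreal (G (replicate m True @- \<omega>)) \<partial>?M)"
    by (rule decomp) measurable
  have e1: "(\<integral>\<^sup>+\<omega>. ennreal (G \<omega>) \<partial>?M) = ennreal (\<integral>\<omega>. G \<omega> \<partial>?M)"
    by (rule nn_integral_eq_integral[OF i0]) (simp add: nn)
  have e2: "(\<integral>\<^sup>+\<omega>. ennreal (G (replicate i True @- False ## \<omega>)) \<partial>?M) = ennreal (\<integral>\<omega>. G (replicate i True @- False ## \<omega>) \<partial>?M)" if "i < m" for i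
    by (rule nn_integral_eq_integral[OF i1[OF that]]) (simp add: nn)
  have e3: "(\<integral>\<^sup>+\<omega>. ennreal (G (replicate m True @- \<omega>)) \<partial>?M) = ennreal (\<integral>\<omega>. G (replicate m True @- \<omega>) \<partial>?M)"
    by (rule nn_integral_eq_integral[OF i2]) (simp add: nn)
  have "ennreal (\<integral>\<omega>. G \<omega> \<partial>?M) = (\<Sum>i<m. ennreal (p^i*(1-p)) * ennreal (\<integral>\<omega>. G (replicate i True @- False ## \<omega>) \<partial>?M))
    + ennreal (p^m) * ennreal (\<integral>\<omega>. G (replicate m True @- \<omega>) \<partial>?M)"
  proof -
    have "(\<Sum>i<m. ennreal (p^i*(1-p)) * (\<integral>\<^sup>+\<omega>. ennreal (G (replicate i True @- False ## \<omega>)) \<partial>?M))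
      = (\<Sum>i<m. ennreal (p^i*(1-p)) * ennreal (\<integral>\<omega>. G (replicate i True @- False ## \<omega>) \<partial>?M))"
      by (rule sum.cong) (simp_all add: e2)
    then show ?thesis using d unfolding e1 e3 by simp
  qed
  also have "\<dots> = ennreal ((\<Sum>i<m. p^i*(1-p) * (\<integral>\<omega>. G (replicate i True @- False ## \<omega>) \<partial>?M))
    + p^m * (\<integral>\<omega>. G (replicate m True @- \<omega>) \<partial>?M))"
    using p0 p1 nn by (intro ennreal_lin) (auto intro!: integral_nonneg)
  finally show ?thesis
    using p0 p1 nn by (subst (asm) ennreal_inj) (auto intro!: add_nonneg_nonneg sum_nonneg mult_nonneg_nonneg integral_nonneg)
qed

end



definition run :: "nat \<Rightarrow> nat \<Rightarrow> bool stream \<Rightarrow> bool" where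
  "run k m \<omega> \<longleftrightarrow> k \<le> m \<and> (\<forall>i<k. \<omega> !! (m - 1 - i))"

lemma wt_run: "waiting_time k \<omega> = (LEAST m. run k m \<omega>)"
  unfolding waiting_time_def run_def ..

lemma wt_allH:
  assumes "1 \<le> k" shows "waiting_time k (replicate k True @- \<omega>) = k"
  unfolding wt_run
proof (rule Least_equality)
  show "run k k (replicate k True @- \<omega>)" unfolding run_def by auto
qed (auto simp: run_def)

lemma run_allH: "run k k (replicate k True @- \<omega>)" unfolding run_def by auto

lemma run_HT:
  assumes "i < k"
  shows "run k m (replicate i True @- False ## \<omega>) \<longleftrightarrow> Suc i + k \<le> m \<and> run k (m - Suc i) \<omega>"
proof -
  have eq: "replicate i True @- False ## \<omega> = (replicate i True @ [False]) @- \<omega>" by simp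
  show ?thesis
  proof
    assume r: "run k m (replicate i True @- False ## \<omega>)"
    have "Suc i + k \<le> m"
    proof (rule ccontr)
      assume "\<not> ?thesis"
      with r have "m - 1 - (m - 1 - i) = i" "m - 1 - i < k" using assms by (auto simp: run_def)
      with r have "(replicate i True @- False ## \<omega>) !! i" unfolding run_def by metis
      then show False by (simp add: shift_snth)
    qed
    moreover have "run k (m - Suc i) \<omega>"
      unfolding run_def
    proof (intro conjI allI impI)
      show "k \<le> m - Suc i" using \<open>Suc i + k \<le> m\<close> by simp
      fix j assume "j < k"
      with r have "((replicate i True @ [False]) @- \<omega>) !! (m - 1 - j)" unfolding run_def eq by blast
      moreover have ge: "m - 1 - j \<ge> length (replicate i True @ [False])" using \<open>Suc i + k \<le> m\<close> \<open>j < k\<close> by simp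
      ultimately have A: "\<omega> !! (m - 1 - j - length (replicate i True @ [False]))" by (subst (asm) shift_snth_ge[OF ge]) assumption
      have B: "m - 1 - j - length (replicate i True @ [False]) = m - Suc i - 1 - j" by simp
      show "\<omega> !! (m - Suc i - 1 - j)" using A unfolding B .
    qed
    ultimately show "Suc i + k \<le> m \<and> run k (m - Suc i) \<omega>" ..
  next
    assume r: "Suc i + k \<le> m \<and> run k (m - Suc i) \<omega>"
    show "run k m (replicate i True @- False ## \<omega>)"
      unfolding run_def eq
    proof (intro conjI allI impI)
      show "k \<le> m" using r by simp
      fix j assume "j < k"
      then have "\<omega> !! (m - Suc i - 1 - j)" using r unfolding run_def by blast
      moreover have ge: "m - 1 - j \<ge> length (replicate i True @ [False])" using r \<open>j < k\<close> by auto
      moreover have B: "m - 1 - j - length (replicate i True @ [False]) = m - Suc i - 1 - j" by simp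
      ultimately show "((replicate i True @ [False]) @- \<omega>) !! (m - 1 - j)" by (subst shift_snth_ge[OF ge]) (simp only: B)
    qed
  qed
qed

lemma ex_run_HT:
  assumes "i < k"
  shows "(\<exists>m. run k m (replicate i True @- False ## \<omega>)) \<longleftrightarrow> (\<exists>m. run k m \<omega>)"
  unfolding run_HT[OF assms]
proof
  assume "\<exists>m. run k m \<omega>"
  then obtain m where "run k m \<omega>" by blast
  then have "Suc i + k \<le> m + Suc i \<and> run k (m + Suc i - Suc i) \<omega>" by (simp add: run_def)
  then show "\<exists>m. Suc i + k \<le> m \<and> run k (m - Suc i) \<omega>" by blast
qed blast

lemma wt_HT:
  assumes "i < k" and ex: "\<exists>m. run k m \<omega>"
  shows "waiting_time k (replicate i True @- False ## \<omega>) = Suc i + waiting_time k \<omega>"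
  unfolding wt_run run_HT[OF assms(1)]
proof (rule Least_equality)
  have r: "run k (LEAST m. run k m \<omega>) \<omega>" using ex by (metis LeastI)
  then have "k \<le> (LEAST m. run k m \<omega>)" by (simp add: run_def)
  with r show "Suc i + k \<le> Suc i + (LEAST m. run k m \<omega>) \<and> run k (Suc i + (LEAST m. run k m \<omega>) - Suc i) \<omega>"
    by simp
next
  fix y assume "Suc i + k \<le> y \<and> run k (y - Suc i) \<omega>"
  then have "(LEAST m. run k m \<omega>) \<le> y - Suc i" "Suc i \<le> y" by (auto intro: Least_le)
  then show "Suc i + (LEAST m. run k m \<omega>) \<le> y" by simp
qed

definition trunc :: "nat \<Rightarrow> nat \<Rightarrow> bool stream \<Rightarrow> nat" where
  "trunc k N \<omega> = (if \<exists>m. run k m \<omega> then min (waiting_time k \<omega>) N else N)"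

lemma trunc_allH: "1 \<le> k \<Longrightarrow> trunc k N (replicate k True @- \<omega>) \<le> k"
  unfolding trunc_def using run_allH[of k \<omega>] wt_allH[of k \<omega>] by auto

lemma trunc_HT: "i < k \<Longrightarrow> trunc k N (replicate i True @- False ## \<omega>) \<le> Suc i + trunc k N \<omega>"
  unfolding trunc_def using ex_run_HT wt_HT by auto

lemma trunc_wt: "trunc k (waiting_time k \<omega>) \<omega> = waiting_time k \<omega>"
  unfolding trunc_def by auto

lemma trunc_mono: "N \<le> N' \<Longrightarrow> trunc k N \<omega> \<le> trunc k N' \<omega>"
  unfolding trunc_def by auto

lemma trunc_le: "trunc k N \<omega> \<le> N"
  unfolding trunc_def by auto



lemma pred_run[measurable]: "Measurable.pred (stream_space (measure_pmf B)) (run k m)"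
  unfolding run_def
proof -
  have [measurable]: "(\<lambda>\<omega>. \<omega> !! n) \<in> measurable (stream_space (measure_pmf B)) (count_space UNIV)" for n :: nat
    using measurable_snth[of n "measure_pmf B"] by (simp add: measurable_cong_sets)
  show "Measurable.pred (stream_space (measure_pmf B)) (\<lambda>\<omega>. k \<le> m \<and> (\<forall>i<k. \<omega> !! (m - 1 - i)))"
    by measurable
qed

lemma meas_wt[measurable]: "waiting_time k \<in> measurable (stream_space (measure_pmf B)) (count_space UNIV)"
  unfolding wt_run by measurable

lemma meas_trunc[measurable]: "trunc k N \<in> measurable (stream_space (measure_pmf B)) (count_space UNIV)"
  unfolding trunc_def by measurable




lemma binom_int:
  fixes X :: "'a \<Rightarrow> real"
  assumes I: "\<And>j. integrable M (\<lambda>\<omega>. X \<omega> ^ j)"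
  shows "integrable M (\<lambda>\<omega>. (X \<omega> + c) ^ n)"
    and "(\<integral>\<omega>. (X \<omega> + c) ^ n \<partial>M) = (\<Sum>j\<le>n. real (n choose j) * c ^ (n - j) * (\<integral>\<omega>. X \<omega> ^ j \<partial>M))"
proof -
  have e: "(X \<omega> + c) ^ n = (\<Sum>j\<le>n. real (n choose j) * c ^ (n - j) * X \<omega> ^ j)" for \<omega>
    by (simp add: binomial_ring mult_ac)
  show "integrable M (\<lambda>\<omega>. (X \<omega> + c) ^ n)" unfolding e
    using I by auto
  show "(\<integral>\<omega>. (X \<omega> + c) ^ n \<partial>M) = (\<Sum>j\<le>n. real (n choose j) * c ^ (n - j) * (\<integral>\<omega>. X \<omega> ^ j \<partial>M))"
    unfolding e using I by simp
qed

lemma absorb: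
  fixes x q r s :: real
  assumes "x \<le> (1 - s) * x + r" "0 < s"
  shows "x \<le> r / s"
  using assms by (simp add: field_simps)




abbreviation SM :: "real \<Rightarrow> bool stream measure" where
  "SM p \<equiv> stream_space (measure_pmf (bernoulli_pmf p))"

lemma ps: "prob_space (SM p)"
  by (rule prob_space.prob_space_stream_space) (rule prob_space_measure_pmf)

lemma geo: "(\<Sum>i<k. p^i*(1-p)) = 1 - (p::real)^k"
  by (simp add: one_diff_power_eq sum_distrib_left mult_ac)

lemma int_trunc:
  assumes [measurable]: "f \<in> measurable (SM p) (SM p)"
  shows "integrable (SM p) (\<lambda>\<omega>. real (trunc k N (f \<omega>)) ^ n)"
proof -
  interpret prob_space "SM p" by (rule ps)
  show ?thesis
  proof (rule integrable_const_bound[where B = "real N ^ n"])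
    show "AE x in SM p. norm (real (trunc k N (f x)) ^ n) \<le> real N ^ n"
      by (auto intro!: power_mono simp: trunc_le)
  qed measurable
qed

context fixes p :: real and k :: nat assumes p0: "0 < p" and p1: "p < 1" and k1: "1 \<le> k"
begin

lemma psi_step:
  "(LINT \<omega>|SM p. real (trunc k N \<omega>)^n) \<le> (1 - p^k) * (LINT \<omega>|SM p. real (trunc k N \<omega>)^n)
     + ((\<Sum>i<k. p^i*(1-p) * (\<Sum>j<n. real(n choose j) * real(Suc i)^(n-j) * (LINT \<omega>|SM p. real (trunc k N \<omega>)^j))) + p^k * real k^n)"
proof -
  interpret prob_space "SM p" by (rule ps)
  define \<psi> where "\<psi> j = (LINT \<omega>|SM p. real (trunc k N \<omega>)^j)" for j
  have d: "\<psi> n = (\<Sum>i<k. p^i*(1-p) * (LINT \<omega>|SM p. real (trunc k N (replicate i True @- False ## \<omega>))^n))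
     + p^k * (LINT \<omega>|SM p. real (trunc k N (replicate k True @- \<omega>))^n)"
    unfolding \<psi>_def
    by (rule decomp_real[OF p0 p1]) (auto intro!: int_trunc)
  have h1: "(LINT \<omega>|SM p. real (trunc k N (replicate i True @- False ## \<omega>))^n)
      \<le> \<psi> n + (\<Sum>j<n. real(n choose j) * real(Suc i)^(n-j) * \<psi> j)" if "i < k" for i
  proof -
    have I: "integrable (SM p) (\<lambda>\<omega>. real (trunc k N \<omega>) ^ j)" for j
      using int_trunc[of "\<lambda>x. x"] by simp
    have "(LINT \<omega>|SM p. real (trunc k N (replicate i True @- False ## \<omega>))^n)
       \<le> (LINT \<omega>|SM p. (real (trunc k N \<omega>) + real (Suc i))^n)"
    proof (rule integral_mono)
      show "integrable (SM p) (\<lambda>\<omega>. real (trunc k N (replicate i True @- False ## \<omega>)) ^ n)"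
        by (rule int_trunc) measurable
      show "integrable (SM p) (\<lambda>\<omega>. (real (trunc k N \<omega>) + real (Suc i)) ^ n)"
        by (rule binom_int(1)[OF I])
      fix \<omega>
      have "trunc k N (replicate i True @- False ## \<omega>) \<le> trunc k N \<omega> + Suc i"
        using trunc_HT[OF that, of N \<omega>] by linarith
      then show "real (trunc k N (replicate i True @- False ## \<omega>)) ^ n \<le> (real (trunc k N \<omega>) + real (Suc i)) ^ n"
        by (intro power_mono) auto
    qed
    also have "\<dots> = (\<Sum>j\<le>n. real (n choose j) * real (Suc i) ^ (n - j) * \<psi> j)"
      unfolding \<psi>_def by (rule binom_int(2)[OF I])
    also have "\<dots> = \<psi> n + (\<Sum>j<n. real(n choose j) * real(Suc i)^(n-j) * \<psi> j)"
      by (simp add: lessThan_Suc_atMost[symmetric])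
    finally show ?thesis .
  qed
  have h2: "(LINT \<omega>|SM p. real (trunc k N (replicate k True @- \<omega>))^n) \<le> real k ^ n"
  proof -
    have "(LINT \<omega>|SM p. real (trunc k N (replicate k True @- \<omega>))^n) \<le> (LINT \<omega>|SM p. real k ^ n)"
      by (rule integral_mono) (auto intro!: int_trunc power_mono simp: trunc_allH[OF k1])
    then show ?thesis by (simp add: prob_space)
  qed
  have "\<psi> n \<le> (\<Sum>i<k. p^i*(1-p) * (\<psi> n + (\<Sum>j<n. real(n choose j) * real(Suc i)^(n-j) * \<psi> j))) + p^k * real k ^ n"
    using p0 p1 h1 h2
    by (subst d) (intro add_mono sum_mono mult_left_mono; auto)
  also have "\<dots> = (\<Sum>i<k. p^i*(1-p)) * \<psi> n + ((\<Sum>i<k. p^i*(1-p) * (\<Sum>j<n. real(n choose j) * real(Suc i)^(n-j) * \<psi> j)) + p^k * real k ^ n)"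
    by (simp add: distrib_left sum.distrib sum_distrib_right sum_distrib_left mult_ac)
  finally show ?thesis unfolding \<psi>_def geo .
qed

end



context fixes p :: real and k :: nat assumes p0: "0 < p" and p1: "p < 1" and k1: "1 \<le> k"
begin

lemma psi_bounded: "\<exists>C. \<forall>N. (LINT \<omega>|SM p. real (trunc k N \<omega>)^n) \<le> C"
proof (induction n rule: less_induct)
  case (less n)
  define \<psi> where "\<psi> j N = (LINT \<omega>|SM p. real (trunc k N \<omega>)^j)" for j N
  have "\<forall>j. \<exists>C. j < n \<longrightarrow> (\<forall>N. \<psi> j N \<le> C)" using less unfolding \<psi>_def by blast
  then obtain Cf where Cf: "\<And>j N. j < n \<Longrightarrow> \<psi> j N \<le> Cf j" by metis
  define R where "R = (\<Sum>i<k. p^i*(1-p) * (\<Sum>j<n. real(n choose j) * real(Suc i)^(n-j) * Cf j)) + p^k * real k^n"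
  have "\<psi> n N \<le> R / p^k" for N
  proof -
    have "\<psi> n N \<le> (1 - p^k) * \<psi> n N + ((\<Sum>i<k. p^i*(1-p) * (\<Sum>j<n. real(n choose j) * real(Suc i)^(n-j) * \<psi> j N)) + p^k * real k^n)"
      unfolding \<psi>_def by (rule psi_step[OF p0 p1 k1])
    then have "\<psi> n N \<le> ((\<Sum>i<k. p^i*(1-p) * (\<Sum>j<n. real(n choose j) * real(Suc i)^(n-j) * \<psi> j N)) + p^k * real k^n) / p^k"
      using p0 by (intro absorb) auto
    also have "\<dots> \<le> R / p^k"
      unfolding R_def using p0 p1 Cf
      by (intro divide_right_mono add_mono order_refl sum_mono mult_left_mono) auto
    finally show ?thesis .
  qed
  then show ?case unfolding \<psi>_def by blast
qed

lemma wt_nn_fin: "(\<integral>\<^sup>+\<omega>. ennreal (real (waiting_time k \<omega>) ^ n) \<partial>SM p) < \<infinity>"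
proof -
  obtain C where C: "\<And>N. (LINT \<omega>|SM p. real (trunc k N \<omega>)^n) \<le> C" using psi_bounded by blast
  have "(\<integral>\<^sup>+\<omega>. ennreal (real (waiting_time k \<omega>) ^ n) \<partial>SM p)
     \<le> (\<integral>\<^sup>+\<omega>. (SUP N. ennreal (real (trunc k N \<omega>) ^ n)) \<partial>SM p)"
  proof (rule nn_integral_mono)
    fix \<omega>
    have "ennreal (real (waiting_time k \<omega>) ^ n) = ennreal (real (trunc k (waiting_time k \<omega>) \<omega>) ^ n)"
      by (simp add: trunc_wt)
    also have "\<dots> \<le> (SUP N. ennreal (real (trunc k N \<omega>) ^ n))" by (rule SUP_upper) auto
    finally show "ennreal (real (waiting_time k \<omega>) ^ n) \<le> (SUP N. ennreal (real (trunc k N \<omega>) ^ n))" .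
  qed
  also have "\<dots> = (SUP N. (\<integral>\<^sup>+\<omega>. ennreal (real (trunc k N \<omega>) ^ n) \<partial>SM p))"
  proof (rule nn_integral_monotone_convergence_SUP)
    show "incseq (\<lambda>N \<omega>. ennreal (real (trunc k N \<omega>) ^ n))"
      by (auto simp: incseq_def le_fun_def intro!: ennreal_leI power_mono trunc_mono)
  qed measurable
  also have "\<dots> \<le> ennreal C"
  proof (rule SUP_least)
    fix N
    have "(\<integral>\<^sup>+\<omega>. ennreal (real (trunc k N \<omega>) ^ n) \<partial>SM p) = ennreal (LINT \<omega>|SM p. real (trunc k N \<omega>)^n)"
      by (rule nn_integral_eq_integral) (auto intro: int_trunc[of "\<lambda>x. x", simplified])
    also have "\<dots> \<le> ennreal C" by (rule ennreal_leI) (rule C)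
    finally show "(\<integral>\<^sup>+\<omega>. ennreal (real (trunc k N \<omega>) ^ n) \<partial>SM p) \<le> ennreal C" .
  qed
  finally show ?thesis by (simp add: le_less_trans)
qed

lemma int_wt: "integrable (SM p) (\<lambda>\<omega>. real (waiting_time k \<omega>) ^ n)"
  by (rule integrableI_bounded) (use wt_nn_fin in auto)

lemma AE_run: "AE \<omega> in SM p. \<exists>m. run k m \<omega>"
proof -
  interpret prob_space "SM p" by (rule ps)
  define G where "G \<omega> = (if \<exists>m. run k m \<omega> then 0 else 1::real)" for \<omega>
  have [measurable]: "G \<in> borel_measurable (SM p)" unfolding G_def by measurable
  have iG: "integrable (SM p) (\<lambda>\<omega>. G (f \<omega>))" if [measurable]: "f \<in> measurable (SM p) (SM p)" for f
    by (rule integrable_const_bound[where B=1]) (auto simp: G_def)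
  have d: "(LINT \<omega>|SM p. G \<omega>) = (\<Sum>i<k. p^i*(1-p) * (LINT \<omega>|SM p. G (replicate i True @- False ## \<omega>)))
     + p^k * (LINT \<omega>|SM p. G (replicate k True @- \<omega>))"
    by (rule decomp_real[OF p0 p1]) (measurable, simp add: G_def, (rule iG, measurable)+)
  have "G (replicate i True @- False ## \<omega>) = G \<omega>" if "i < k" for i \<omega>
    unfolding G_def using ex_run_HT[OF that] by simp
  moreover have "G (replicate k True @- \<omega>) = 0" for \<omega>
    unfolding G_def using run_allH by auto
  ultimately have "(LINT \<omega>|SM p. G \<omega>) = (\<Sum>i<k. p^i*(1-p)) * (LINT \<omega>|SM p. G \<omega>)"
    by (subst d) (simp add: sum_distrib_right)
  then have "(LINT \<omega>|SM p. G \<omega>) = 0" using p0 p1 unfolding geo by (simp add: algebra_simps)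
  then have "AE \<omega> in SM p. G \<omega> = 0"
    by (subst (asm) integral_nonneg_eq_0_iff_AE) (auto intro: iG[of "\<lambda>x. x", simplified] simp: G_def)
  then show ?thesis by eventually_elim (auto simp: G_def split: if_splits)
qed

end



lemma reidx: "(\<Sum>i=1..k. f i) = (\<Sum>i<k. f (Suc i))"
proof -
  have "(\<Sum>i=1..k. f i) = (\<Sum>i\<in>{Suc 0..<Suc k}. f i)"
    by (simp add: atLeastLessThanSuc_atLeastAtMost)
  also have "\<dots> = (\<Sum>i\<in>{0..<k}. f (Suc i))" by (rule sum.shift_bounds_Suc_ivl)
  finally show ?thesis by (simp add: atLeast0LessThan)
qed

lemma per_j:
  fixes p :: real assumes "0 < p"
  shows "(\<Sum>i<k. p^i*(1-p) * real (Suc i) ^ m) / p^k = (\<Sum>i=1..k. (1 - p) * real i ^ m / p ^ (k - i + 1))"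
proof -
  have "(\<Sum>i<k. p^i*(1-p) * real (Suc i) ^ m) / p^k = (\<Sum>i<k. p^i*(1-p) * real (Suc i) ^ m / p^k)"
    by (simp add: sum_divide_distrib)
  also have "\<dots> = (\<Sum>i<k. (1 - p) * real (Suc i) ^ m / p ^ (k - Suc i + 1))"
  proof (rule sum.cong)
    fix i assume "i \<in> {..<k}"
    then have "k = i + (k - Suc i + 1)" by simp
    then have "p ^ k = p ^ i * p ^ (k - Suc i + 1)"
      by (metis power_add)
    then show "p^i*(1-p) * real (Suc i) ^ m / p^k = (1 - p) * real (Suc i) ^ m / p ^ (k - Suc i + 1)"
      using assms by (simp add: field_simps)
  qed simp
  also have "\<dots> = (\<Sum>i=1..k. (1 - p) * real i ^ m / p ^ (k - i + 1))"
    by (rule reidx[symmetric])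
  finally show ?thesis .
qed

context fixes p :: real and k :: nat assumes p0: "0 < p" and p1: "p < 1" and k1: "1 \<le> k"
begin

lemma recur:
  defines "E \<equiv> (\<lambda>j::nat. LINT \<omega>|SM p. real (waiting_time k \<omega>) ^ j)"
  shows "E n = real k ^ n + (\<Sum>j<n. real (n choose j) * E j *
                 (\<Sum>i=1..k. (1 - p) * real i ^ (n - j) / p ^ (k - i + 1)))"
proof -
  interpret prob_space "SM p" by (rule ps)
  have Ij: "integrable (SM p) (\<lambda>\<omega>. real (waiting_time k \<omega>) ^ j)" for j
    by (rule int_wt[OF p0 p1 k1])
  define S where "S i = (\<Sum>j<n. real(n choose j) * real(Suc i)^(n-j) * E j)" for i
  have ae: "AE \<omega> in SM p. real (waiting_time k (replicate i True @- False ## \<omega>)) ^ n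
      = (real (waiting_time k \<omega>) + real (Suc i)) ^ n" if "i < k" for i
    using AE_run[OF p0 p1 k1] by eventually_elim (simp add: wt_HT[OF that] add_ac)
  have iH: "integrable (SM p) (\<lambda>\<omega>. real (waiting_time k (replicate i True @- False ## \<omega>)) ^ n)" if "i < k" for i
    by (subst integrable_cong_AE[OF _ _ ae[OF that]]) (measurable, rule binom_int(1)[OF Ij])
  have vH: "(LINT \<omega>|SM p. real (waiting_time k (replicate i True @- False ## \<omega>)) ^ n) = E n + S i" if "i < k" for i
  proof -
    have "(LINT \<omega>|SM p. real (waiting_time k (replicate i True @- False ## \<omega>)) ^ n)
        = (LINT \<omega>|SM p. (real (waiting_time k \<omega>) + real (Suc i)) ^ n)"
      by (rule integral_cong_AE[OF _ _ ae[OF that]]) measurable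
    also have "\<dots> = (\<Sum>j\<le>n. real (n choose j) * real (Suc i) ^ (n - j) * E j)"
      unfolding E_def by (rule binom_int(2)[OF Ij])
    also have "\<dots> = E n + S i"
      by (simp add: S_def lessThan_Suc_atMost[symmetric])
    finally show ?thesis .
  qed
  have d: "E n = (\<Sum>i<k. p^i*(1-p) * (LINT \<omega>|SM p. real (waiting_time k (replicate i True @- False ## \<omega>)) ^ n))
     + p^k * (LINT \<omega>|SM p. real (waiting_time k (replicate k True @- \<omega>)) ^ n)"
    unfolding E_def
    apply (rule decomp_real[OF p0 p1])
    apply measurable
    apply (rule int_wt[OF p0 p1 k1])
    apply (erule iH)
    apply (simp add: wt_allH[OF k1])
    done
  also have "\<dots> = (\<Sum>i<k. p^i*(1-p) * (E n + S i)) + p^k * real k ^ n"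
    by (simp add: vH wt_allH[OF k1] prob_space)
  also have "\<dots> = (1 - p^k) * E n + (\<Sum>i<k. p^i*(1-p) * S i) + p^k * real k ^ n"
    by (simp add: distrib_left sum.distrib geo[symmetric] sum_distrib_right)
  finally have "E n = (1 - p^k) * E n + (\<Sum>i<k. p^i*(1-p) * S i) + p^k * real k ^ n" .
  then have "E n = real k ^ n + (\<Sum>i<k. p^i*(1-p) * S i) / p^k"
    using p0 by (simp add: field_simps)
  also have "(\<Sum>i<k. p^i*(1-p) * S i) = (\<Sum>j<n. real (n choose j) * E j * (\<Sum>i<k. p^i*(1-p) * real (Suc i) ^ (n - j)))"
    unfolding S_def by (simp add: sum_distrib_left sum_distrib_right mult_ac sum.swap[of _ "{..<k}"])
  also have "\<dots> / p^k = (\<Sum>j<n. real (n choose j) * E j * ((\<Sum>i<k. p^i*(1-p) * real (Suc i) ^ (n - j)) / p^k))"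
    by (simp only: sum_divide_distrib[of _ "{..<n}"] times_divide_eq_right)
  also have "\<dots> = (\<Sum>j<n. real (n choose j) * E j * (\<Sum>i=1..k. (1 - p) * real i ^ (n - j) / p ^ (k - i + 1)))"
    by (rule sum.cong[OF refl]) (simp only: per_j[OF p0])
  finally show ?thesis .
qed

end



lemma eul_zero: "m < t \<Longrightarrow> eulerian m t = 0"
  by (cases m) auto

lemma eulk_zero: "m < t \<Longrightarrow> eulerian_k c m t = 0"
  by (cases m) auto

definition PS :: "nat \<Rightarrow> nat \<Rightarrow> real poly" where
  "PS k m = (\<Sum>i=1..k. monom (real i ^ m) i)"
definition AP :: "nat \<Rightarrow> real poly" where
  "AP m = (\<Sum>t\<le>m. monom (real_of_int (eulerian m t)) t)"
definition BP :: "nat \<Rightarrow> nat \<Rightarrow> real poly" where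
  "BP k m = (\<Sum>t\<le>m. monom (real_of_int (eulerian_k (int k) m t)) t)"
definition DP :: "nat \<Rightarrow> nat \<Rightarrow> real poly" where
  "DP k m = monom 1 (k+1) * BP k m"
definition FP :: "nat \<Rightarrow> nat \<Rightarrow> real poly" where
  "FP k m = [:1,-1:] ^ Suc m * PS k m"
definition Lop :: "nat \<Rightarrow> real poly \<Rightarrow> real poly" where
  "Lop m Q = [:0,1:] * ([:1,-1:] * pderiv Q + smult (of_nat (Suc m)) Q)"

lemma coeff_Lop0: "coeff (Lop m Q) 0 = 0"
  by (simp add: Lop_def)

lemma coeff_LopS: "coeff (Lop m Q) (Suc s) = real (Suc s) * coeff Q (Suc s) + (real m + 1 - real s) * coeff Q s"
  by (cases s) (simp_all add: Lop_def coeff_pderiv algebra_simps)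

lemma Lop_diff: "Lop m (P - Q) = Lop m P - Lop m Q"
proof (rule poly_eqI)
  fix t show "coeff (Lop m (P - Q)) t = coeff (Lop m P - Lop m Q) t"
    by (cases t) (simp_all add: coeff_Lop0 coeff_LopS algebra_simps)
qed

lemma coeff_PS: "coeff (PS k m) t = (if 1 \<le> t \<and> t \<le> k then real t ^ m else 0)"
  by (simp add: PS_def coeff_sum coeff_monom)

lemma coeff_AP: "coeff (AP m) t = real_of_int (eulerian m t)"
proof (cases "t \<le> m")
  case True then show ?thesis unfolding AP_def by (rule coeff_sum_monom)
next
  case False then show ?thesis by (simp add: AP_def coeff_sum coeff_monom eul_zero)
qed

lemma coeff_BP: "coeff (BP k m) t = real_of_int (eulerian_k (int k) m t)"
proof (cases "t \<le> m")
  case True then show ?thesis unfolding BP_def by (rule coeff_sum_monom)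
next
  case False then show ?thesis by (simp add: BP_def coeff_sum coeff_monom eulk_zero)
qed

lemma coeff_DP: "coeff (DP k m) t = (if k + 1 \<le> t then real_of_int (eulerian_k (int k) m (t - (k+1))) else 0)"
  by (simp add: DP_def coeff_monom_mult coeff_BP)

lemma AP_Suc: "AP (Suc m) = Lop m (AP m)"
proof (rule poly_eqI)
  fix t show "coeff (AP (Suc m)) t = coeff (Lop m (AP m)) t"
  proof (cases t)
    case 0 then show ?thesis by (simp add: coeff_AP coeff_Lop0)
  next
    case (Suc s)
    show ?thesis
    proof (cases "s \<le> m")
      case True
      then have "real (Suc m - Suc s + 1) = real m + 1 - real s" by (simp add: of_nat_diff)
      then show ?thesis using True unfolding Suc coeff_LopS coeff_AP by simp
    next
      case False
      then show ?thesis unfolding Suc coeff_LopS coeff_AP by (simp add: eul_zero)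
    qed
  qed
qed

lemma DP_Suc: "DP k (Suc m) = Lop m (DP k m)"
proof (rule poly_eqI)
  fix t show "coeff (DP k (Suc m)) t = coeff (Lop m (DP k m)) t"
  proof (cases t)
    case 0 then show ?thesis by (simp add: coeff_DP coeff_Lop0)
  next
    case (Suc s)
    consider "s < k" | "s = k" | "k < s" by linarith
    then show ?thesis
    proof cases
      case 1 then show ?thesis unfolding Suc coeff_LopS coeff_DP by simp
    next
      case 2 then show ?thesis unfolding Suc coeff_LopS coeff_DP by simp
    next
      case 3
      then obtain i where i: "s = k + i" "1 \<le> i" by (metis le_add_diff_inverse less_imp_le_nat less_diff_conv2 add_0_right linorder_not_less less_one order_refl zero_less_diff)
      show ?thesis
      proof (cases "i \<le> Suc m")
        case True
        then show ?thesis unfolding Suc coeff_LopS coeff_DP using i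
          by (cases i) (auto simp: algebra_simps)
      next
        case False
        then show ?thesis unfolding Suc coeff_LopS coeff_DP using i
          by (cases i) (auto simp: eulk_zero)
      qed
    qed
  qed
qed

lemma PS_Suc: "PS k (Suc m) = [:0,1:] * pderiv (PS k m)"
proof (rule poly_eqI)
  fix t show "coeff (PS k (Suc m)) t = coeff ([:0,1:] * pderiv (PS k m)) t"
    by (cases t) (simp_all add: coeff_PS coeff_pderiv)
qed

lemma gen:
  fixes U P :: "real poly"
  assumes dU: "pderiv U = [:-1:]"
  shows "U * pderiv (U ^ Suc m * P) + smult (of_nat (Suc m)) (U ^ Suc m * P) = U ^ Suc (Suc m) * pderiv P"
proof -
  have sm: "smult c X = [:c:] * X" for c and X :: "real poly" by simp
  have "pderiv (U ^ Suc m * P) = U ^ Suc m * pderiv P + P * ([:of_nat (Suc m):] * U ^ m * [:-1:])"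
    by (simp only: pderiv_mult pderiv_power_Suc dU sm)
  moreover have "[:-1:] = (-1 :: real poly)" by (rule poly_eqI) (simp add: coeff_pCons split: nat.split)
  ultimately have "pderiv (U ^ Suc m * P) = U ^ Suc m * pderiv P - [:of_nat (Suc m):] * (U ^ m * P)"
    by (simp only:) (simp add: algebra_simps)
  then show ?thesis
    by (simp only: sm power_Suc) (simp add: algebra_simps)
qed

lemma FP_Suc: "FP k (Suc m) = Lop m (FP k m)"
proof -
  have dU: "pderiv [:1,-1:] = ([:-1:] :: real poly)" by (simp add: pderiv_pCons)
  have eq: "[:1,-1:] * pderiv (FP k m) + smult (of_nat (Suc m)) (FP k m) = [:1,-1:] ^ Suc (Suc m) * pderiv (PS k m)"
    unfolding FP_def by (rule gen[OF dU])
  show ?thesis unfolding Lop_def eq unfolding FP_def PS_Suc by (rule mult.left_commute)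
qed




lemma FP0: "1 \<le> k \<Longrightarrow> FP k 0 = [:0,1:] - DP k 0"
proof (rule poly_eqI)
  fix t assume k: "1 \<le> k"
  show "coeff (FP k 0) t = coeff ([:0,1:] - DP k 0) t"
  proof (cases t)
    case 0 then show ?thesis by (simp add: FP_def coeff_DP coeff_PS)
  next
    case (Suc s)
    then show ?thesis using k
      by (cases s) (auto simp: FP_def coeff_DP coeff_PS)
  qed
qed

lemma Lop0X: "Lop 0 [:0,1:] = [:0,1:]"
proof (rule poly_eqI)
  fix t show "coeff (Lop 0 [:0,1:]) t = coeff [:0,1:] t"
  proof (cases t)
    case 0 then show ?thesis by (simp add: coeff_Lop0)
  next
    case (Suc s) then show ?thesis by (cases s) (auto simp: coeff_LopS coeff_pCons split: nat.split)
  qed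
qed

lemma AP1: "AP (Suc 0) = [:0,1:]"
proof (rule poly_eqI)
  fix t show "coeff (AP (Suc 0)) t = coeff [:0,1:] t"
  proof (cases t)
    case 0 then show ?thesis by (simp add: coeff_AP)
  next
    case (Suc s) then show ?thesis by (cases s) (auto simp: coeff_AP coeff_pCons split: nat.split)
  qed
qed

lemma FP_main_Suc: "1 \<le> k \<Longrightarrow> FP k (Suc m) = AP (Suc m) - DP k (Suc m)"
proof (induction m)
  case 0
  show ?case using FP_Suc[of k 0] FP0[OF 0] Lop_diff[of 0] Lop0X DP_Suc[of k 0] AP1 by simp
next
  case (Suc m)
  then show ?case by (simp add: FP_Suc[of k "Suc m"] AP_Suc[of "Suc m"] DP_Suc[of k "Suc m"] Lop_diff)
qed

lemma FP_main: "1 \<le> k \<Longrightarrow> 1 \<le> m \<Longrightarrow> FP k m = AP m - DP k m"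
  using FP_main_Suc[of k "m - 1"] by simp

lemma sum_ext0:
  fixes f :: "nat \<Rightarrow> real"
  assumes "m \<le> n" "\<And>i. m < i \<Longrightarrow> f i = 0"
  shows "(\<Sum>i=0..n. f i) = (\<Sum>i\<le>m. f i)"
  by (rule sum.mono_neutral_right) (use assms in auto)

lemma eul_identity:
  fixes p :: real
  assumes p0: "0 < p" and p1: "p < 1" and k1: "1 \<le> k" and m1: "1 \<le> m" and mn: "m \<le> n"
  shows "(\<Sum>i=1..k. (1 - p) * real i ^ m / p ^ (k - i + 1))
    = (\<Sum>i=0..n. (real_of_int (eulerian m i) * p ^ i - real_of_int (eulerian_k (int k) m i) * p ^ (k + i + 1))
                 / ((1 - p) ^ m * p ^ (k + 1)))"
proof -
  define D where "D = (1 - p) ^ m * p ^ (k + 1)"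
  have D0: "D \<noteq> 0" using p0 p1 by (simp add: D_def)
  have pFP: "poly (FP k m) p = (1 - p) ^ Suc m * (\<Sum>i=1..k. real i ^ m * p ^ i)"
    by (simp add: FP_def PS_def poly_sum poly_monom del: power_Suc)
  have pAP: "poly (AP m) p = (\<Sum>i\<le>m. real_of_int (eulerian m i) * p ^ i)"
    by (simp add: AP_def poly_sum poly_monom)
  have pDP: "poly (DP k m) p = p ^ (k+1) * (\<Sum>i\<le>m. real_of_int (eulerian_k (int k) m i) * p ^ i)"
    by (simp add: DP_def BP_def poly_sum poly_monom)
  have "(\<Sum>i=0..n. (real_of_int (eulerian m i) * p ^ i - real_of_int (eulerian_k (int k) m i) * p ^ (k + i + 1)) / D)
      = (\<Sum>i=0..n. (real_of_int (eulerian m i) * p ^ i - real_of_int (eulerian_k (int k) m i) * p ^ (k + i + 1))) / D"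
    by (simp add: sum_divide_distrib)
  also have "(\<Sum>i=0..n. (real_of_int (eulerian m i) * p ^ i - real_of_int (eulerian_k (int k) m i) * p ^ (k + i + 1)))
      = (\<Sum>i\<le>m. (real_of_int (eulerian m i) * p ^ i - real_of_int (eulerian_k (int k) m i) * p ^ (k + i + 1)))"
    by (rule sum_ext0[OF mn]) (simp add: eul_zero eulk_zero)
  also have "\<dots> = poly (AP m) p - poly (DP k m) p"
    unfolding pAP pDP by (simp add: sum_subtractf sum_distrib_left power_add mult_ac)
  also have "\<dots> = poly (FP k m) p" using FP_main[OF k1 m1] by simp
  also have "\<dots> / D = (\<Sum>i=1..k. (1 - p) * real i ^ m / p ^ (k - i + 1))"
    unfolding pFP D_def
  proof -
    have "(\<Sum>i=1..k. (1 - p) * real i ^ m / p ^ (k - i + 1)) = (\<Sum>i=1..k. (1 - p) * (real i ^ m * p ^ i) / p ^ (k + 1))"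
    proof (rule sum.cong[OF refl])
      fix i assume "i \<in> {1..k}"
      then have "k + 1 = i + (k - i + 1)" by simp
      then have "p ^ (k + 1) = p ^ i * p ^ (k - i + 1)" by (metis power_add)
      then show "(1 - p) * real i ^ m / p ^ (k - i + 1) = (1 - p) * (real i ^ m * p ^ i) / p ^ (k + 1)"
        using p0 by (simp add: field_simps)
    qed
    also have "\<dots> = (1 - p) * (\<Sum>i=1..k. real i ^ m * p ^ i) / p ^ (k + 1)"
      by (simp add: sum_divide_distrib sum_distrib_left)
    also have "\<dots> = (1 - p) ^ Suc m * (\<Sum>i=1..k. real i ^ m * p ^ i) / ((1 - p) ^ m * p ^ (k + 1))"
      using p0 p1 by (simp add: field_simps)
    finally show "(1 - p) ^ Suc m * (\<Sum>i=1..k. real i ^ m * p ^ i) / ((1 - p) ^ m * p ^ (k + 1)) = (\<Sum>i=1..k. (1 - p) * real i ^ m / p ^ (k - i + 1))" by simp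
  qed
  finally show ?thesis unfolding D_def by simp
qed


theorem theorem3p1:
  fixes p :: real and k :: nat
  assumes "0 < p" and "p < 1" and "1 \<le> k"
  defines "M \<equiv> stream_space (measure_pmf (bernoulli_pmf p))"
    and "E \<equiv> (\<lambda>j::nat. LINT \<omega>|stream_space (measure_pmf (bernoulli_pmf p)). real (waiting_time k \<omega>) ^ j)"
  shows "(\<forall>n. integrable M (\<lambda>\<omega>. real (waiting_time k \<omega>) ^ n))
    \<and> E 0 = 1
    \<and> (\<forall>n\<ge>1.
         E n = real k ^ n + (\<Sum>j<n. real (n choose j) * E j *
                 (\<Sum>i=1..k. (1 - p) * real i ^ (n - j) / p ^ (k - i + 1)))
       \<and> E n = real k ^ n + (\<Sum>j<n. real (n choose j) * E j *
                 (\<Sum>i=0..n. (real_of_int (eulerian (n - j) i) * p ^ i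
                              - real_of_int (eulerian_k (int k) (n - j) i) * p ^ (k + i + 1))
                            / ((1 - p) ^ (n - j) * p ^ (k + 1)))))"
proof (intro conjI allI impI)
  fix n
  show "integrable M (\<lambda>\<omega>. real (waiting_time k \<omega>) ^ n)"
    unfolding M_def by (rule int_wt[OF assms(1-3)])
next
  interpret prob_space "SM p" by (rule ps)
  show "E 0 = 1" unfolding E_def by (simp add: prob_space)
next
  fix n :: nat assume n1: "1 \<le> n"
  have R: "E n = real k ^ n + (\<Sum>j<n. real (n choose j) * E j *
                 (\<Sum>i=1..k. (1 - p) * real i ^ (n - j) / p ^ (k - i + 1)))"
    unfolding E_def by (rule recur[OF assms(1-3)])
  then show "E n = real k ^ n + (\<Sum>j<n. real (n choose j) * E j *
                 (\<Sum>i=1..k. (1 - p) * real i ^ (n - j) / p ^ (k - i + 1)))" .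
  have "(\<Sum>j<n. real (n choose j) * E j *
                 (\<Sum>i=1..k. (1 - p) * real i ^ (n - j) / p ^ (k - i + 1)))
      = (\<Sum>j<n. real (n choose j) * E j *
                 (\<Sum>i=0..n. (real_of_int (eulerian (n - j) i) * p ^ i
                              - real_of_int (eulerian_k (int k) (n - j) i) * p ^ (k + i + 1))
                            / ((1 - p) ^ (n - j) * p ^ (k + 1))))"
  proof (rule sum.cong[OF refl])
    fix j assume "j \<in> {..<n}"
    then have "1 \<le> n - j" "n - j \<le> n" by auto
    then show "real (n choose j) * E j * (\<Sum>i=1..k. (1 - p) * real i ^ (n - j) / p ^ (k - i + 1))
      = real (n choose j) * E j *
                 (\<Sum>i=0..n. (real_of_int (eulerian (n - j) i) * p ^ i
                              - real_of_int (eulerian_k (int k) (n - j) i) * p ^ (k + i + 1))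
                            / ((1 - p) ^ (n - j) * p ^ (k + 1)))"
      by (simp only: eul_identity[OF assms(1-3)])
  qed
  with R show "E n = real k ^ n + (\<Sum>j<n. real (n choose j) * E j *
                 (\<Sum>i=0..n. (real_of_int (eulerian (n - j) i) * p ^ i
                              - real_of_int (eulerian_k (int k) (n - j) i) * p ^ (k + i + 1))
                            / ((1 - p) ^ (n - j) * p ^ (k + 1))))" by simp
qed

end
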